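(* For any $0 \le \alpha \le \beta \le 1$ and $p \in [0,1]$, $$p\,|p - \alpha| + (1-p)\,|p - \beta| \le 2\left[\,\left|p(1-\alpha) - (1-p)\beta\right| + (\beta - \alpha)\min\{p(1-\alpha), (1-p)\beta\}\right].$$ *)

theory Defs
  imports Complex_Main
begin

end

theory Submission
  imports Defs
begin

theorem lemma16:
  fixes \<alpha> \<beta> p :: real
  assumes "0 \<le> \<alpha>" and "\<alpha> \<le> \<beta>" and "\<beta> \<le> 1"
    and "0 \<le> p" and "p \<le> 1"
  shows "p * \<bar>p - \<alpha>\<bar> + (1 - p) * \<bar>p - \<beta>\<bar>
    \<le> 2 * (\<bar>p * (1 - \<alpha>) - (1 - p) * \<beta>\<bar> + (\<beta> - \<alpha>) * min (p * (1 - \<alpha>)) ((1 - p) * \<beta>))"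
proof -
  define A where "A = p * (1 - \<alpha>)"
  define B where "B = (1 - p) * \<beta>"
  have g1: "0 \<le> (\<beta> - \<alpha>) * A" "0 \<le> (\<beta> - \<alpha>) * B" "0 \<le> (\<beta>-\<alpha>)*(1-\<alpha>)" "0 \<le> \<beta>*(\<beta>-\<alpha>)"
    using assms unfolding A_def B_def by (auto intro!: mult_nonneg_nonneg)
  have AB: "A - B = p * (1 - \<alpha> + \<beta>) - \<beta>" unfolding A_def B_def by (simp add: algebra_simps)
  show ?thesis
  proof (cases "p \<le> \<alpha>")
    case True
    have "0 \<le> (\<alpha> - p) * (1 - \<alpha> + \<beta>)" using True assms by (auto intro!: mult_nonneg_nonneg)
    hence "A \<le> B" using AB g1 by (simp add: algebra_simps)
    moreover have "p * \<bar>p - \<alpha>\<bar> + (1 - p) * \<bar>p - \<beta>\<bar> = p*(\<alpha>-p) + (1-p)*(\<beta>-p)" using True assms by simp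
    ultimately show ?thesis using g1 True assms unfolding A_def[symmetric] B_def[symmetric]
      by (simp add: min_def A_def B_def algebra_simps)
  next
    case F1: False
    show ?thesis
    proof (cases "p \<ge> \<beta>")
      case True
      have "0 \<le> (p - \<beta>) * (1 - \<alpha> + \<beta>)" using True assms by (auto intro!: mult_nonneg_nonneg)
      hence "B \<le> A" using AB g1 by (simp add: algebra_simps)
      moreover have "p * \<bar>p - \<alpha>\<bar> + (1 - p) * \<bar>p - \<beta>\<bar> = p*(p-\<alpha>) + (1-p)*(p-\<beta>)" using True F1 assms by simp
      ultimately show ?thesis using g1 True assms unfolding A_def[symmetric] B_def[symmetric]
        by (simp add: min_def A_def B_def algebra_simps)
    next
      case F2: False
      have L: "p * \<bar>p - \<alpha>\<bar> + (1 - p) * \<bar>p - \<beta>\<bar> = p*(p-\<alpha>) + (1-p)*(\<beta>-p)" using F1 F2 assms by simp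
      have h1: "0 \<le> p*(p-\<alpha>)*(\<beta>-\<alpha>)" "0 \<le> (1-p)*(\<beta>-\<alpha>)*(\<beta>-p)"
        using F1 F2 assms by (auto intro!: mult_nonneg_nonneg)
      show ?thesis
      proof (cases "A \<le> B")
        case True
        have "0 \<le> p * (B - A)" using True assms by auto
        hence "p*(p-\<alpha>) + (1-p)*(\<beta>-p) \<le> 2 * ((B - A) + (\<beta> - \<alpha>) * A)"
          using h1 True unfolding A_def B_def by (simp add: algebra_simps)
        thus ?thesis using L True unfolding A_def[symmetric] B_def[symmetric] by (simp add: min_def)
      next
        case False
        have "0 \<le> (1-p) * (A - B)" using False assms by auto
        hence "p*(p-\<alpha>) + (1-p)*(\<beta>-p) \<le> 2 * ((A - B) + (\<beta> - \<alpha>) * B)"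
          using h1 False unfolding A_def B_def by (simp add: algebra_simps)
        thus ?thesis using L False unfolding A_def[symmetric] B_def[symmetric] by (simp add: min_def)
      qed
    qed
  qed
qed

end
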